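(* Assume $M$ has genus zero and $a+b=1$ (so $a,b\in(0,1)$). Let $p=\frac{q'}{q'+a^{-1}-1}$. Then the marginal law of $\omega$ under $\mathbf P$ is $$\mathbf P(\omega)\propto (qq')^{k(\omega)}p^{|\omega|}(1-p)^{|\mathsf E\setminus\omega|},\qquad\omega\subseteq\mathsf E,$$ i.e. the $\mathrm{FK}(qq')$ random cluster model on $\mathsf G$ with parameter $p$ and free boundary conditions.
   Context: $M$ is the sphere or the plane. Let $\mathsf G=(\mathsf V,\mathsf E)$ be a finite connected graph embedded in $M$ with all faces topological discs, and $\mathsf G^*=(\mathsf U,\mathsf E^* )$ its embedded dual ($\mathsf U$ = faces of $\mathsf G$); $e^*$ is the dual edge crossing $e$, $\xi^*=\{e^*:e\in\xi\}$. Fix integers $q,q'\ge1$, finite $Q,Q'\subset\mathbb C$ with $Q=-Q$, $Q'=-Q'$, $|Q|=q$, $|Q'|=q'$, and $a,b\in(0,1]$. For $\sigma:\mathsf V\to Q$, $\eta(\sigma)\subseteq\mathsf E^*$ is the set of $e^*$ whose primal $e$ has endpoints with different $\sigma$-values; for $\sigma':\mathsf U\to Q'$, $\eta(\sigma')\subseteq\mathsf E$ is the set of $e$ whose dual $e^*$ has endpoints with different $\sigma'$-values. $\mathbf P(\sigma,\sigma')\propto a^{|\eta(\sigma')|}b^{|\eta(\sigma)|}$ on $\Sigma=\{(\sigma,\sigma'):\eta(\sigma)^*\cap\eta(\sigma')=\emptyset\}$. Percolation (here for $a+b=1$): given $(\sigma,\sigma')$, every edge of $\eta(\sigma')$ and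 every dual edge of $\eta(\sigma)$ is open; for each pair $(e,e^* )$ with $e\notin\eta(\sigma')$, $e^*\notin\eta(\sigma)$, independently, $e$ is open and $e^*$ closed with probability $1-b=a$, and $e$ closed and $e^*$ open with probability $1-a=b$. $\omega\subseteq\mathsf E$ is the set of open primal edges; $\mathbf P$ denotes the joint law. $k(\omega)$ is the number of connected components of $(\mathsf V,\omega)$, isolated vertices included. *)

theory Defs
  imports "HOL-Library.FuncSet" "HOL-Combinatorics.Permutations" Complex_Main
begin

text \<open>Combinatorial maps (rotation systems) encoding a finite connected graph
cellularly embedded in an orientable surface. The involution
map_alpha swaps the two darts of an edge, the permutation s (of the darts)
is the vertex rotation; vertices are the orbits of s, faces are the orbits of
s o map_alpha.  The surface has genus zero iff |V| - |E| + |U| = 2.\<close>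

definition darts :: "'e set \<Rightarrow> ('e \<times> bool) set" where
  "darts E = E \<times> (UNIV :: bool set)"

definition map_alpha :: "'e \<times> bool \<Rightarrow> 'e \<times> bool" where
  "map_alpha d = (fst d, \<not> snd d)"

definition orb :: "('a \<Rightarrow> 'a) \<Rightarrow> 'a \<Rightarrow> 'a set" where
  "orb f x = range (\<lambda>n. (f ^^ n) x)"

definition face_perm :: "('e \<times> bool \<Rightarrow> 'e \<times> bool) \<Rightarrow> 'e \<times> bool \<Rightarrow> 'e \<times> bool" where
  "face_perm s = s \<circ> map_alpha"

definition verts :: "'e set \<Rightarrow> ('e \<times> bool \<Rightarrow> 'e \<times> bool) \<Rightarrow> ('e \<times> bool) set set" where
  "verts E s = orb s ` darts E"

definition faces :: "'e set \<Rightarrow> ('e \<times> bool \<Rightarrow> 'e \<times> bool) \<Rightarrow> ('e \<times> bool) set set" where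
  "faces E s = orb (face_perm s) ` darts E"

text \<open>endpoints of a primal edge e, and endpoints of its dual edge e*\<close>
definition src :: "('e \<times> bool \<Rightarrow> 'e \<times> bool) \<Rightarrow> 'e \<Rightarrow> ('e \<times> bool) set" where
  "src s e = orb s (e, True)"
definition tgt :: "('e \<times> bool \<Rightarrow> 'e \<times> bool) \<Rightarrow> 'e \<Rightarrow> ('e \<times> bool) set" where
  "tgt s e = orb s (e, False)"
definition lface :: "('e \<times> bool \<Rightarrow> 'e \<times> bool) \<Rightarrow> 'e \<Rightarrow> ('e \<times> bool) set" where
  "lface s e = orb (face_perm s) (e, True)"
definition rface :: "('e \<times> bool \<Rightarrow> 'e \<times> bool) \<Rightarrow> 'e \<Rightarrow> ('e \<times> bool) set" where
  "rface s e = orb (face_perm s) (e, False)"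

definition adj :: "('e \<times> bool \<Rightarrow> 'e \<times> bool) \<Rightarrow> 'e set \<Rightarrow> (('e \<times> bool) set \<times> ('e \<times> bool) set) set" where
  "adj s \<omega> = {(src s e, tgt s e) | e. e \<in> \<omega>} \<union> {(tgt s e, src s e) | e. e \<in> \<omega>}"

definition ncomp :: "'e set \<Rightarrow> ('e \<times> bool \<Rightarrow> 'e \<times> bool) \<Rightarrow> 'e set \<Rightarrow> nat" where
  "ncomp E s \<omega> = card (verts E s // (adj s \<omega>)\<^sup>*)"

definition spherical_map :: "'e set \<Rightarrow> ('e \<times> bool \<Rightarrow> 'e \<times> bool) \<Rightarrow> bool" where
  "spherical_map E s \<longleftrightarrow> finite E \<and> s permutes darts E \<and> ncomp E s E = 1 \<and>
     int (card (verts E s)) - int (card E) + int (card (faces E s)) = 2"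

text \<open>etaP s sg = {e. e* \<in> eta(sg)} (primal labels of the dual edges in eta(sg));
      etaD s sg' = eta(sg') \<subseteq> E.\<close>
definition etaP :: "'e set \<Rightarrow> ('e \<times> bool \<Rightarrow> 'e \<times> bool) \<Rightarrow> (('e \<times> bool) set \<Rightarrow> complex) \<Rightarrow> 'e set" where
  "etaP E s sg = {e \<in> E. sg (src s e) \<noteq> sg (tgt s e)}"
definition etaD :: "'e set \<Rightarrow> ('e \<times> bool \<Rightarrow> 'e \<times> bool) \<Rightarrow> (('e \<times> bool) set \<Rightarrow> complex) \<Rightarrow> 'e set" where
  "etaD E s sg' = {e \<in> E. sg' (lface s e) \<noteq> sg' (rface s e)}"

text \<open>unnormalised weight of (sg, sg') (zero outside Sigma)\<close>
definition spin_weight :: "real \<Rightarrow> real \<Rightarrow> 'e set \<Rightarrow> ('e \<times> bool \<Rightarrow> 'e \<times> bool) \<Rightarrow>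
    (('e \<times> bool) set \<Rightarrow> complex) \<Rightarrow> (('e \<times> bool) set \<Rightarrow> complex) \<Rightarrow> real" where
  "spin_weight a b E s sg sg' =
     (if etaP E s sg \<inter> etaD E s sg' = {} then a ^ card (etaD E s sg') * b ^ card (etaP E s sg) else 0)"

text \<open>conditional probability of the set omega of open primal edges given (sg, sg')\<close>
definition perc_cond :: "real \<Rightarrow> real \<Rightarrow> 'e set \<Rightarrow> ('e \<times> bool \<Rightarrow> 'e \<times> bool) \<Rightarrow>
    (('e \<times> bool) set \<Rightarrow> complex) \<Rightarrow> (('e \<times> bool) set \<Rightarrow> complex) \<Rightarrow> 'e set \<Rightarrow> real" where
  "perc_cond a b E s sg sg' \<omega> =
     (\<Prod>e\<in>E. if e \<in> etaD E s sg' then (if e \<in> \<omega> then 1 else 0)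
             else if e \<in> etaP E s sg then (if e \<in> \<omega> then 0 else 1)
             else if e \<in> \<omega> then 1 - b else 1 - a)"

definition joint_weight where
  "joint_weight Q Q' a b E s \<omega> =
     (\<Sum>sg\<in>verts E s \<rightarrow>\<^sub>E Q. \<Sum>sg'\<in>faces E s \<rightarrow>\<^sub>E Q'.
        spin_weight a b E s sg sg' * perc_cond a b E s sg sg' \<omega>)"

definition omega_marginal :: "complex set \<Rightarrow> complex set \<Rightarrow> real \<Rightarrow> real \<Rightarrow> 'e set \<Rightarrow>
    ('e \<times> bool \<Rightarrow> 'e \<times> bool) \<Rightarrow> 'e set \<Rightarrow> real" where
  "omega_marginal Q Q' a b E s \<omega> =
     joint_weight Q Q' a b E s \<omega> / (\<Sum>\<omega>'\<in>Pow E. joint_weight Q Q' a b E s \<omega>')"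

definition fk_weight :: "real \<Rightarrow> real \<Rightarrow> 'e set \<Rightarrow> ('e \<times> bool \<Rightarrow> 'e \<times> bool) \<Rightarrow> 'e set \<Rightarrow> real" where
  "fk_weight qq p E s \<omega> = qq ^ ncomp E s \<omega> * p ^ card \<omega> * (1 - p) ^ card (E - \<omega>)"

definition fk_law :: "real \<Rightarrow> real \<Rightarrow> 'e set \<Rightarrow> ('e \<times> bool \<Rightarrow> 'e \<times> bool) \<Rightarrow> 'e set \<Rightarrow> real" where
  "fk_law qq p E s \<omega> = fk_weight qq p E s \<omega> / (\<Sum>\<omega>'\<in>Pow E. fk_weight qq p E s \<omega>')"

end

theory Submission
  imports Defs "HOL-Combinatorics.Orbits"
begin
lemma in_darts: "(x \<in> darts E) = (fst x \<in> E)"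
  by (cases x) (auto simp: darts_def)

lemma alpha_simp[simp]: "map_alpha (e, b) = (e, \<not> b)"
  by (simp add: map_alpha_def)

lemma alpha_alpha[simp]: "map_alpha (map_alpha d) = d"
  by (simp add: map_alpha_def)

lemma alpha_bij: "bij_betw map_alpha (darts E) (darts E)"
  by (rule bij_betw_byWitness[where f'=map_alpha]) (auto simp: map_alpha_def darts_def)

lemma face_perm_face_perm[simp]: "face_perm (face_perm s) = s"
  by (auto simp: face_perm_def fun_eq_iff)

lemma self_in_orb: "x \<in> orb f x"
  unfolding orb_def by (metis funpow_0 rangeI)

locale cmap =
  fixes E :: "'e set" and s :: "'e \<times> bool \<Rightarrow> 'e \<times> bool"
  assumes finE: "finite E" and sbij: "bij_betw s (darts E) (darts E)"
begin

lemma finD: "finite (darts E)"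
  using finE by (simp add: darts_def)

lemma s_in: "x \<in> darts E \<Longrightarrow> s x \<in> darts E"
  using sbij bij_betwE by blast

lemma funpow_in: "x \<in> darts E \<Longrightarrow> (s ^^ n) x \<in> darts E"
  by (induction n) (auto simp: s_in)

lemma orb_step: assumes x: "x \<in> darts E" shows "orb s (s x) = orb s x"
proof -
  define g where "g = (\<lambda>x. if x \<in> darts E then s x else x)"
  have "bij_betw g (darts E) (darts E)"
    using sbij by (rule bij_betw_cong[THEN iffD1, rotated]) (simp add: g_def)
  then have gp: "g permutes darts E"
    by (rule bij_imp_permutes) (simp add: g_def)
  then have perm: "permutation g" using finD permutation_permutes by blast
  have gn: "(g ^^ n) y = (s ^^ n) y" if "y \<in> darts E" for y n
    using that by (induction n) (auto simp: g_def funpow_in)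
  have eq: "orb s y = orbit g y" if "y \<in> darts E" for y
    using that by (auto simp: orb_def orbit_altdef_permutation[OF perm] gn)
  have "orb s (s x) = orbit g (g x)" using eq[of "s x"] s_in[OF x] x by (simp add: g_def)
  also have "\<dots> = orbit g x" by (rule permutation_orbit_step[OF perm])
  finally show ?thesis using eq[OF x] by simp
qed

lemma orb_funpow: "x \<in> darts E \<Longrightarrow> orb s ((s ^^ n) x) = orb s x"
  by (induction n) (simp_all add: orb_step funpow_in)

lemma orb_mem_eq: assumes "x \<in> darts E" "y \<in> orb s x" shows "orb s y = orb s x"
proof -
  obtain n where "y = (s ^^ n) x" using assms(2) unfolding orb_def by blast
  then show ?thesis using orb_funpow[OF assms(1)] by simp
qed

lemma orb_eq_mem: "orb s y = orb s x \<Longrightarrow> y \<in> orb s x"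
  using self_in_orb by metis

lemma orb_sub: "x \<in> darts E \<Longrightarrow> orb s x \<subseteq> darts E"
  unfolding orb_def using funpow_in[of x] by blast

end

lemma sym_adj: "sym (adj s \<omega>)"
  by (auto simp: adj_def sym_def)

lemma adj_insert: "adj s (insert e \<omega>) = adj s \<omega> \<union> {(src s e, tgt s e), (tgt s e, src s e)}"
  by (auto simp: adj_def)

lemma adj_empty[simp]: "adj s {} = {}"
  by (auto simp: adj_def)

lemma rtr_sym: "sym r \<Longrightarrow> (x, y) \<in> r\<^sup>* \<Longrightarrow> (y, x) \<in> r\<^sup>*"
  using sym_rtrancl by (metis symD)

lemma rtr_img_eq: assumes "sym r" "(x, y) \<in> r\<^sup>*" shows "r\<^sup>* `` {x} = r\<^sup>* `` {y}"
  using assms rtr_sym[OF assms(1)] by (auto intro: rtrancl_trans)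

lemma rtr_img_eq_iff: assumes "sym r" shows "(r\<^sup>* `` {x} = r\<^sup>* `` {y}) = ((x, y) \<in> r\<^sup>*)"
  using rtr_img_eq[OF assms] by (auto simp: rtr_sym[OF assms])

lemma rtr_insert_char:
  assumes sr: "sym r" and xy: "(x, y) \<in> (r \<union> {(u, v), (v, u)})\<^sup>*"
  shows "(x, y) \<in> r\<^sup>* \<or> ((x, u) \<in> r\<^sup>* \<and> (v, y) \<in> r\<^sup>*) \<or> ((x, v) \<in> r\<^sup>* \<and> (u, y) \<in> r\<^sup>*)"
  using xy
proof (induction rule: rtrancl_induct)
  case base
  then show ?case by simp
next
  case (step y z)
  have sy: "\<And>a b. (a, b) \<in> r\<^sup>* \<Longrightarrow> (b, a) \<in> r\<^sup>*" using rtr_sym[OF sr] by blast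
  from step.hyps(2) show ?case
  proof
    assume "(y, z) \<in> r"
    then show ?thesis using step.IH by (meson rtrancl.rtrancl_into_rtrancl)
  next
    assume "(y, z) \<in> {(u, v), (v, u)}"
    then show ?thesis using step.IH sy by (auto intro: rtrancl_trans)
  qed
qed

lemma quotient_card_insert:
  assumes fin: "finite A" and sr: "sym r" and u: "u \<in> A"
  shows "card (A // r\<^sup>*) \<le> card (A // (r \<union> {(u, v), (v, u)})\<^sup>*) + 1"
proof -
  let ?R = "r\<^sup>*" and ?R' = "(r \<union> {(u, v), (v, u)})\<^sup>*"
  have sr': "sym (r \<union> {(u, v), (v, u)})" using sr by (auto simp: sym_def)
  have RR': "?R \<subseteq> ?R'" by (rule rtrancl_mono) blast
  define f where "f = (\<lambda>C. ?R' `` C)"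
  have fx: "f (?R `` {x}) = ?R' `` {x}" for x
  proof -
    have "f (?R `` {x}) \<subseteq> ?R' `` {x}"
    proof
      fix y assume "y \<in> f (?R `` {x})"
      then obtain z where "(x, z) \<in> ?R" "(z, y) \<in> ?R'" unfolding f_def by blast
      then show "y \<in> ?R' `` {x}" using RR' by (metis ImageI singletonI rtrancl_trans subsetD)
    qed
    moreover have "?R' `` {x} \<subseteq> f (?R `` {x})" unfolding f_def by blast
    ultimately show ?thesis by blast
  qed
  have "inj_on f (A // ?R - {?R `` {u}})"
  proof (rule inj_onI)
    fix C1 C2 assume C1: "C1 \<in> A // ?R - {?R `` {u}}" and C2: "C2 \<in> A // ?R - {?R `` {u}}"
      and eq: "f C1 = f C2"
    obtain x where x: "x \<in> A" "C1 = ?R `` {x}" using C1 by (auto elim!: quotientE)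
    obtain y where y: "y \<in> A" "C2 = ?R `` {y}" using C2 by (auto elim!: quotientE)
    have "?R' `` {x} = ?R' `` {y}" using eq x y fx by simp
    moreover have "y \<in> ?R' `` {y}" by blast
    ultimately have "(x, y) \<in> ?R'" by (metis Image_singleton_iff)
    then have c: "(x, y) \<in> ?R \<or> ((x, u) \<in> ?R \<and> (v, y) \<in> ?R) \<or> ((x, v) \<in> ?R \<and> (u, y) \<in> ?R)"
      by (rule rtr_insert_char[OF sr])
    have nx: "(x, u) \<notin> ?R" using C1 x rtr_img_eq[OF sr, of x u] by auto
    have ny: "(u, y) \<notin> ?R" using C2 y rtr_img_eq[OF sr, of u y] by auto
    from c nx ny have "(x, y) \<in> ?R" by blast
    then show "C1 = C2" using x y rtr_img_eq[OF sr, of x y] by simp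
  qed
  moreover have "f ` (A // ?R - {?R `` {u}}) \<subseteq> A // ?R'"
  proof
    fix D assume "D \<in> f ` (A // ?R - {?R `` {u}})"
    then obtain x where "x \<in> A" "D = f (?R `` {x})" by (auto elim!: quotientE)
    then show "D \<in> A // ?R'" using fx by (simp add: quotientI)
  qed
  moreover have "finite (A // ?R')" unfolding quotient_def using fin by auto
  ultimately have "card (A // ?R - {?R `` {u}}) \<le> card (A // ?R')"
    by (meson card_inj_on_le)
  moreover have "finite (A // ?R)" unfolding quotient_def using fin by auto
  moreover have "card (A // ?R) \<le> card (A // ?R - {?R `` {u}}) + 1"
    using card_Suc_Diff1[OF \<open>finite (A // ?R)\<close>, of "?R `` {u}"] by (cases "?R `` {u} \<in> A // ?R") auto
  ultimately show ?thesis by linarith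
qed

lemma propag: assumes "\<forall>(x, y)\<in>r. \<sigma> x = \<sigma> y" "(x, y) \<in> r\<^sup>*" shows "\<sigma> x = \<sigma> y"
  using assms(2) by (induction rule: rtrancl_induct) (use assms(1) in auto)

lemma count_const:
  fixes A :: "'a set" and Q :: "'b set" and r :: "('a \<times> 'a) set"
  assumes fin: "finite A" and sr: "sym r" and rA: "r \<subseteq> A \<times> A"
  shows "card {\<sigma> \<in> A \<rightarrow>\<^sub>E Q. \<forall>(x, y)\<in>r. \<sigma> x = \<sigma> y} = card Q ^ card (A // r\<^sup>*)"
proof -
  let ?R = "r\<^sup>*"
  define F where "F = (\<lambda>\<tau>::'a set \<Rightarrow> 'b. \<lambda>x\<in>A. \<tau> (?R `` {x}))"
  define G where "G = (\<lambda>\<sigma>::'a \<Rightarrow> 'b. \<lambda>C\<in>A // ?R. \<sigma> (SOME x. x \<in> A \<and> C = ?R `` {x}))"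
  have some: "(SOME x. x \<in> A \<and> C = ?R `` {x}) \<in> A \<and> C = ?R `` {SOME x. x \<in> A \<and> C = ?R `` {x}}"
    if "C \<in> A // ?R" for C
    by (rule someI_ex) (use that in \<open>auto elim!: quotientE\<close>)
  have "bij_betw F (A // ?R \<rightarrow>\<^sub>E Q) {\<sigma> \<in> A \<rightarrow>\<^sub>E Q. \<forall>(x, y)\<in>r. \<sigma> x = \<sigma> y}"
  proof (rule bij_betw_byWitness[where f'=G])
    show "\<forall>\<tau>\<in>A // ?R \<rightarrow>\<^sub>E Q. G (F \<tau>) = \<tau>"
    proof
      fix \<tau> assume t: "\<tau> \<in> A // ?R \<rightarrow>\<^sub>E Q"
      show "G (F \<tau>) = \<tau>"
      proof
        fix C show "G (F \<tau>) C = \<tau> C"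
        proof (cases "C \<in> A // ?R")
          case True
          define x where "x = (SOME x. x \<in> A \<and> C = ?R `` {x})"
          have x0: "x \<in> A \<and> C = ?R `` {x}" unfolding x_def by (rule some[OF True])
          have x: "x \<in> A" "C = ?R `` {x}" using x0 by (rule conjunct1, rule conjunct2)
          have "G (F \<tau>) C = F \<tau> x" unfolding G_def x_def using True by (simp only: restrict_apply')
          also have "\<dots> = \<tau> (?R `` {x})" unfolding F_def using x(1) by (simp only: restrict_apply')
          also have "\<dots> = \<tau> C" using x(2) by (simp only:)
          finally show ?thesis .
        next
          case False
          have "G (F \<tau>) C = undefined" unfolding G_def using False by simp
          moreover have "\<tau> C = undefined" using PiE_arb[OF t False] .
          ultimately show ?thesis by simp
        qed
      qed
    qed
    show "\<forall>\<sigma>\<in>{\<sigma> \<in> A \<rightarrow>\<^sub>E Q. \<forall>(x, y)\<in>r. \<sigma> x = \<sigma> y}. F (G \<sigma>) = \<sigma>"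
    proof
      fix \<sigma> assume sg: "\<sigma> \<in> {\<sigma> \<in> A \<rightarrow>\<^sub>E Q. \<forall>(x, y)\<in>r. \<sigma> x = \<sigma> y}"
      show "F (G \<sigma>) = \<sigma>"
      proof
        fix x show "F (G \<sigma>) x = \<sigma> x"
        proof (cases "x \<in> A")
          case True
          have q: "?R `` {x} \<in> A // ?R" using True by (rule quotientI)
          define y where "y = (SOME y. y \<in> A \<and> ?R `` {x} = ?R `` {y})"
          have y0: "y \<in> A \<and> ?R `` {x} = ?R `` {y}" unfolding y_def by (rule some[OF q])
          have y: "y \<in> A" "?R `` {x} = ?R `` {y}" using y0 by (rule conjunct1, rule conjunct2)
          have "(x, y) \<in> ?R" using y(2) rtr_img_eq_iff[OF sr] by blast
          moreover have "\<forall>(x, y)\<in>r. \<sigma> x = \<sigma> y" using sg[unfolded mem_Collect_eq] by (rule conjunct2)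
          ultimately have "\<sigma> x = \<sigma> y" using propag by metis
          have "F (G \<sigma>) x = G \<sigma> (?R `` {x})" unfolding F_def using True by (simp only: restrict_apply')
          also have "\<dots> = \<sigma> y" unfolding G_def y_def using q by (simp only: restrict_apply')
          finally show ?thesis using \<open>\<sigma> x = \<sigma> y\<close> by simp
        next
          case False
          have "F (G \<sigma>) x = undefined" unfolding F_def using False by simp
          moreover have "\<sigma> x = undefined" using PiE_arb[OF conjunct1[OF sg[unfolded mem_Collect_eq]] False] .
          ultimately show ?thesis by simp
        qed
      qed
    qed
    show "F ` (A // ?R \<rightarrow>\<^sub>E Q) \<subseteq> {\<sigma> \<in> A \<rightarrow>\<^sub>E Q. \<forall>(x, y)\<in>r. \<sigma> x = \<sigma> y}"
    proof
      fix \<sigma> assume "\<sigma> \<in> F ` (A // ?R \<rightarrow>\<^sub>E Q)"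
      then obtain \<tau> where t: "\<tau> \<in> A // ?R \<rightarrow>\<^sub>E Q" "\<sigma> = F \<tau>" by blast
      have "\<sigma> \<in> A \<rightarrow>\<^sub>E Q" using t by (auto simp: F_def intro: quotientI)
      moreover have "\<sigma> x = \<sigma> y" if "(x, y) \<in> r" for x y
      proof (cases "x \<in> A \<and> y \<in> A")
        case True
        have "?R `` {x} = ?R `` {y}" using that rtr_img_eq[OF sr, of x y] by blast
        then show ?thesis using True t by (simp add: F_def)
      next
        case False
        then show ?thesis using that rA by blast
      qed
      ultimately show "\<sigma> \<in> {\<sigma> \<in> A \<rightarrow>\<^sub>E Q. \<forall>(x, y)\<in>r. \<sigma> x = \<sigma> y}" by blast
    qed
    show "G ` {\<sigma> \<in> A \<rightarrow>\<^sub>E Q. \<forall>(x, y)\<in>r. \<sigma> x = \<sigma> y} \<subseteq> A // ?R \<rightarrow>\<^sub>E Q"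
    proof
      fix \<tau> assume "\<tau> \<in> G ` {\<sigma> \<in> A \<rightarrow>\<^sub>E Q. \<forall>(x, y)\<in>r. \<sigma> x = \<sigma> y}"
      then obtain \<sigma> where sg: "\<sigma> \<in> A \<rightarrow>\<^sub>E Q" "\<tau> = G \<sigma>" by blast
      show "\<tau> \<in> A // ?R \<rightarrow>\<^sub>E Q" unfolding sg(2) G_def
      proof (rule PiE_I)
        fix C assume C: "C \<in> A // ?R"
        have "(SOME x. x \<in> A \<and> C = ?R `` {x}) \<in> A" using some[OF C] by (rule conjunct1)
        then show "(\<lambda>C\<in>A // ?R. \<sigma> (SOME x. x \<in> A \<and> C = ?R `` {x})) C \<in> Q"
          using C sg(1) by auto
      qed simp
    qed
  qed
  then have "card {\<sigma> \<in> A \<rightarrow>\<^sub>E Q. \<forall>(x, y)\<in>r. \<sigma> x = \<sigma> y} = card (A // ?R \<rightarrow>\<^sub>E Q)"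
    by (simp add: bij_betw_same_card)
  also have "\<dots> = card Q ^ card (A // ?R)"
    using fin by (simp add: card_PiE quotient_def)
  finally show ?thesis .
qed

lemma card_split:
  assumes "finite D"
  shows "card {d\<in>D. P d} = card {d\<in>D. P d \<and> Q d} + card {d\<in>D. P d \<and> \<not> Q d}"
proof -
  have "{d\<in>D. P d} = {d\<in>D. P d \<and> Q d} \<union> {d\<in>D. P d \<and> \<not> Q d}" by blast
  moreover have "{d\<in>D. P d \<and> Q d} \<inter> {d\<in>D. P d \<and> \<not> Q d} = {}" by blast
  ultimately show ?thesis using assms by (simp add: card_Un_disjoint)
qed

lemma parity:
  fixes f :: "'a \<Rightarrow> 'a" and h :: "'a \<Rightarrow> bool"
  assumes fin: "finite D" and bij: "bij_betw f D D"
  shows "even (card {d\<in>D. h d \<noteq> h (f d)})"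
proof -
  have img: "f ` {d\<in>D. h (f d)} = {d\<in>D. h d}"
  proof
    show "f ` {d\<in>D. h (f d)} \<subseteq> {d\<in>D. h d}" using bij bij_betwE by blast
    show "{d\<in>D. h d} \<subseteq> f ` {d\<in>D. h (f d)}"
    proof
      fix y assume y: "y \<in> {d\<in>D. h d}"
      then obtain x where "x \<in> D" "y = f x" using bij by (metis (no_types, lifting) bij_betw_imp_surj_on imageE mem_Collect_eq)
      then show "y \<in> f ` {d\<in>D. h (f d)}" using y by blast
    qed
  qed
  have inj: "inj_on f {d\<in>D. h (f d)}" using bij bij_betw_imp_inj_on inj_on_subset by (metis (no_types, lifting) mem_Collect_eq subsetI)
  have c1: "card {d\<in>D. h (f d)} = card {d\<in>D. h d}" using card_image[OF inj] img by simp
  have c2: "card {d\<in>D. h d} = card {d\<in>D. h d \<and> h (f d)} + card {d\<in>D. h d \<and> \<not> h (f d)}"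
    using card_split[OF fin] .
  have c3: "card {d\<in>D. h (f d)} = card {d\<in>D. h (f d) \<and> h d} + card {d\<in>D. h (f d) \<and> \<not> h d}"
    using card_split[OF fin] .
  have e1: "{d\<in>D. h (f d) \<and> h d} = {d\<in>D. h d \<and> h (f d)}" by blast
  have c4: "card {d\<in>D. h d \<noteq> h (f d)} = card {d\<in>D. h d \<and> \<not> h (f d)} + card {d\<in>D. h (f d) \<and> \<not> h d}"
  proof -
    have "{d\<in>D. h d \<noteq> h (f d)} = {d\<in>D. h d \<and> \<not> h (f d)} \<union> {d\<in>D. h (f d) \<and> \<not> h d}" by blast
    moreover have "{d\<in>D. h d \<and> \<not> h (f d)} \<inter> {d\<in>D. h (f d) \<and> \<not> h d} = {}" by blast
    ultimately show ?thesis using fin by (simp add: card_Un_disjoint)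
  qed
  from c1 c2 c3[unfolded e1] c4 have "card {d\<in>D. h d \<noteq> h (f d)} = 2 * card {d\<in>D. h d \<and> \<not> h (f d)}" by linarith
  then show ?thesis by simp
qed

lemma src_orb: "src s e = orb s (e, True)" by (simp add: src_def)
lemma tgt_orb: "tgt s e = orb s (e, False)" by (simp add: tgt_def)

lemma adj_dart: "e \<in> \<omega> \<Longrightarrow> (orb s (e, b), orb s (e, \<not> b)) \<in> adj s \<omega>"
  by (cases b) (auto simp: adj_def src_def tgt_def)

lemma adj_cases: assumes "(v, w) \<in> adj s \<omega>" shows "\<exists>e b. e \<in> \<omega> \<and> v = orb s (e, b) \<and> w = orb s (e, \<not> b)"
proof -
  consider (a) e where "e \<in> \<omega>" "v = src s e" "w = tgt s e" | (b) e where "e \<in> \<omega>" "v = tgt s e" "w = src s e"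
    using assms unfolding adj_def by blast
  then show ?thesis
  proof cases
    case a then show ?thesis unfolding src_def tgt_def by (intro exI[of _ e] exI[of _ True]) simp
  next
    case b then show ?thesis unfolding src_def tgt_def by (intro exI[of _ e] exI[of _ False]) simp
  qed
qed

lemma fp_alpha: "face_perm s (map_alpha d) = s d"
  by (simp add: face_perm_def)

context cmap
begin

lemma phi_cmap: "cmap E (face_perm s)"
proof
  show "finite E" by (rule finE)
  show "bij_betw (face_perm s) (darts E) (darts E)"
    unfolding face_perm_def using alpha_bij sbij by (rule bij_betw_trans)
qed

lemma orb_phi_s: "d \<in> darts E \<Longrightarrow> orb (face_perm s) (s d) = orb (face_perm s) (map_alpha d)"
proof -
  assume d: "d \<in> darts E"
  have ad: "map_alpha d \<in> darts E" using alpha_bij d bij_betwE by blast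
  have "s d = face_perm s (map_alpha d)" by (simp add: fp_alpha)
  then show ?thesis using cmap.orb_step[OF phi_cmap ad] by simp
qed


lemma key:
  assumes om: "\<omega> \<subseteq> E" and e: "e \<in> E" "e \<notin> \<omega>"
    and nc: "(src s e, tgt s e) \<notin> (adj s \<omega>)\<^sup>*"
  shows "(src (face_perm s) e, tgt (face_perm s) e) \<in> (adj (face_perm s) (E - insert e \<omega>))\<^sup>*"
proof (rule ccontr)
  let ?\<phi> = "face_perm s"
  let ?S = "E - insert e \<omega>"
  assume ncD: "(src ?\<phi> e, tgt ?\<phi> e) \<notin> (adj ?\<phi> ?S)\<^sup>*"
  define R where "R = (adj s \<omega>)\<^sup>*"
  define RD where "RD = (adj ?\<phi> ?S)\<^sup>*"
  define C where "C = R `` {src s e}"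
  define DC where "DC = {d \<in> darts E. orb s d \<in> C}"
  define A where "A = RD `` {src ?\<phi> e}"
  define h where "h = (\<lambda>d. orb ?\<phi> d \<in> A)"
  have Cstep: "Y \<in> C" if "X \<in> C" "(X, Y) \<in> adj s \<omega>" for X Y
    using that unfolding C_def R_def by (meson Image_singleton_iff rtrancl.rtrancl_into_rtrancl)
  have Astep: "Y \<in> A" if "X \<in> A" "(X, Y) \<in> adj ?\<phi> ?S" for X Y
    using that unfolding A_def RD_def by (meson Image_singleton_iff rtrancl.rtrancl_into_rtrancl)
  have DCsub: "DC \<subseteq> darts E" unfolding DC_def by blast
  have finDC: "finite DC" using finite_subset[OF DCsub finD] .
  have sDC: "s ` DC \<subseteq> DC"
  proof
    fix y assume "y \<in> s ` DC"
    then obtain d where d: "d \<in> DC" "y = s d" by blast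
    have dd: "d \<in> darts E" "orb s d \<in> C" using d(1) unfolding DC_def by blast+
    have "s d \<in> darts E" using s_in[OF dd(1)] .
    moreover have "orb s (s d) \<in> C" using orb_step[OF dd(1)] dd(2) by simp
    ultimately show "y \<in> DC" using d(2) unfolding DC_def by blast
  qed
  have injDC: "inj_on s DC" using bij_betw_imp_inj_on[OF sbij] DCsub by (rule inj_on_subset)
  have bijDC: "bij_betw s DC DC" unfolding bij_betw_def using endo_inj_surj[OF finDC sDC injDC] injDC by blast
  have par: "even (card {d \<in> DC. h d \<noteq> h (s d)})" by (rule parity[OF finDC bijDC])
  have hs: "h (s d) = h (map_alpha d)" if "d \<in> darts E" for d
    unfolding h_def using orb_phi_s[OF that] by simp
  have h4: "h d = h (map_alpha d)" if "d \<in> darts E" "fst d \<in> ?S" for d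
  proof -
    obtain e' b where d: "d = (e', b)" by (cases d)
    have "e' \<in> ?S" using that d by simp
    then have a1: "(orb ?\<phi> (e', b), orb ?\<phi> (e', \<not> b)) \<in> adj ?\<phi> ?S"
      and a2: "(orb ?\<phi> (e', \<not> b), orb ?\<phi> (e', b)) \<in> adj ?\<phi> ?S"
      using adj_dart[of e' ?S ?\<phi> b] adj_dart[of e' ?S ?\<phi> "\<not> b"] by simp_all
    show ?thesis unfolding h_def d alpha_simp using Astep a1 a2 by blast
  qed
  have h5: "map_alpha d \<in> DC" if "d \<in> DC" "fst d \<in> \<omega>" for d
  proof -
    obtain e' b where d: "d = (e', b)" by (cases d)
    have e': "e' \<in> \<omega>" using that d by simp
    have a1: "(orb s (e', b), orb s (e', \<not> b)) \<in> adj s \<omega>" using adj_dart[OF e'] .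
    have "orb s (e', \<not> b) \<in> C" using Cstep[OF _ a1] that(1) d unfolding DC_def by blast
    moreover have "(e', \<not> b) \<in> darts E" using e' om by (simp add: in_darts subset_iff)
    ultimately show ?thesis unfolding d alpha_simp DC_def by blast
  qed
  have eT: "(e, True) \<in> DC"
  proof -
    have "orb s (e, True) \<in> C" unfolding C_def R_def src_def by blast
    then show ?thesis unfolding DC_def using e(1) by (simp add: in_darts)
  qed
  have eF: "(e, False) \<notin> DC"
  proof
    assume "(e, False) \<in> DC"
    then have "tgt s e \<in> C" unfolding DC_def tgt_def by blast
    then show False using nc unfolding C_def R_def by blast
  qed
  have heT: "h (e, True)" unfolding h_def A_def src_def RD_def by blast
  have heF: "\<not> h (e, False)"
  proof
    assume "h (e, False)"
    then have "tgt ?\<phi> e \<in> A" unfolding h_def tgt_def .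
    then show False using ncD unfolding A_def RD_def by blast
  qed
  define Y where "Y = {e' \<in> \<omega>. (e', True) \<in> DC \<and> h (e', True) \<noteq> h (e', False)}"
  have X: "{d \<in> DC. h d \<noteq> h (s d)} = insert (e, True) (Y \<times> UNIV)"
  proof (rule set_eqI)
    fix d :: "'e \<times> bool"
    obtain e' b where d: "d = (e', b)" by (cases d)
    show "d \<in> {d \<in> DC. h d \<noteq> h (s d)} \<longleftrightarrow> d \<in> insert (e, True) (Y \<times> UNIV)"
    proof
      assume "d \<in> {d \<in> DC. h d \<noteq> h (s d)}"
      then have dDC: "d \<in> DC" and hne: "h d \<noteq> h (s d)" by blast+
      have dd: "d \<in> darts E" using dDC DCsub by blast
      have hne': "h (e', b) \<noteq> h (e', \<not> b)" using hne hs[OF dd] d by simp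
      have e'E: "e' \<in> E" using dd d by (simp add: in_darts)
      consider "e' = e" | "e' \<in> \<omega>" | "e' \<in> ?S" using e'E by blast
      then show "d \<in> insert (e, True) (Y \<times> UNIV)"
      proof cases
        case 1
        then have "b = True" using eF dDC d by (cases b) auto
        then show ?thesis using 1 d by simp
      next
        case 2
        have "(e', True) \<in> DC"
        proof (cases b)
          case True then show ?thesis using dDC d by simp
        next
          case False
          then show ?thesis using h5[OF dDC] 2 d by simp
        qed
        moreover have "h (e', True) \<noteq> h (e', False)" using hne' by (cases b) auto
        ultimately have "e' \<in> Y" unfolding Y_def using 2 by blast
        then show ?thesis using d by simp
      next
        case 3
        then have "h d = h (map_alpha d)" using h4[OF dd] d by simp
        then show ?thesis using hne hs[OF dd] by simp
      qed
    next
      assume "d \<in> insert (e, True) (Y \<times> UNIV)"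
      then consider "d = (e, True)" | "e' \<in> Y" using d by blast
      then show "d \<in> {d \<in> DC. h d \<noteq> h (s d)}"
      proof cases
        case 1
        have "h (s d) = h (e, False)" using hs[of d] 1 eT DCsub by auto
        then show ?thesis using 1 eT heT heF by simp
      next
        case 2
        then have y: "e' \<in> \<omega>" "(e', True) \<in> DC" "h (e', True) \<noteq> h (e', False)" unfolding Y_def by blast+
        have dDC: "d \<in> DC"
        proof (cases b)
          case True then show ?thesis using y d by simp
        next
          case False
          then show ?thesis using h5[OF y(2)] y(1) d by simp
        qed
        have dd: "d \<in> darts E" using dDC DCsub by blast
        have "h d \<noteq> h (map_alpha d)" using y(3) d by (cases b) auto
        then show ?thesis using dDC hs[OF dd] by simp
      qed
    qed
  qed
  have finY: "finite Y" using finite_subset[OF _ finE, of Y] om unfolding Y_def by blast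
  have nY: "(e, True) \<notin> Y \<times> UNIV" using e(2) unfolding Y_def by blast
  have "card {d \<in> DC. h d \<noteq> h (s d)} = Suc (card Y * 2)"
    unfolding X using nY finY by (simp add: card_cartesian_product)
  then show False using par by simp
qed

lemma dual_conn:
  assumes c: "ncomp E s E = 1"
  shows "ncomp E (face_perm s) E = 1"
proof -
  let ?\<phi> = "face_perm s"
  define R where "R = (adj s E)\<^sup>*"
  define RD where "RD = (adj ?\<phi> E)\<^sup>*"
  have "card (verts E s // R) = 1" using c unfolding ncomp_def R_def .
  then obtain X where VX: "verts E s // R = {X}" by (rule card_1_singletonE)
  have allR: "(v, w) \<in> R" if "v \<in> verts E s" "w \<in> verts E s" for v w
  proof -
    have "R `` {v} \<in> verts E s // R" "R `` {w} \<in> verts E s // R" using that by (auto intro: quotientI)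
    then have "R `` {v} = X" "R `` {w} = X" using VX by simp_all
    then have "R `` {v} = R `` {w}" by simp
    then show ?thesis unfolding R_def using rtr_img_eq_iff[OF sym_adj] by blast
  qed
  have "verts E s \<noteq> {}" using VX by auto
  then obtain d0 where d0: "d0 \<in> darts E" unfolding verts_def by blast
  define K where "K = {d \<in> darts E. (orb ?\<phi> d0, orb ?\<phi> d) \<in> RD}"
  have Ka: "map_alpha d \<in> K" if "d \<in> K" for d
  proof -
    obtain e' b where d: "d = (e', b)" by (cases d)
    have dd: "d \<in> darts E" "(orb ?\<phi> d0, orb ?\<phi> d) \<in> RD" using that unfolding K_def by blast+
    have e': "e' \<in> E" using dd(1) d by (simp add: in_darts)
    have "(orb ?\<phi> d, orb ?\<phi> (map_alpha d)) \<in> adj ?\<phi> E" using adj_dart[OF e'] d by simp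
    then have "(orb ?\<phi> d0, orb ?\<phi> (map_alpha d)) \<in> RD" using dd(2) unfolding RD_def
      by (rule rtrancl.rtrancl_into_rtrancl[rotated])
    moreover have "map_alpha d \<in> darts E" using e' d by (simp add: in_darts)
    ultimately show ?thesis unfolding K_def by blast
  qed
  have Ks: "s d \<in> K" if "d \<in> K" for d
  proof -
    have dd: "d \<in> darts E" using that unfolding K_def by blast
    have "map_alpha d \<in> K" using Ka[OF that] .
    then show ?thesis using orb_phi_s[OF dd] s_in[OF dd] unfolding K_def by simp
  qed
  have Kp: "(s ^^ n) d \<in> K" if "d \<in> K" for d n
    using that by (induction n) (simp_all add: Ks)
  have Korb: "x \<in> K" if dK: "d \<in> K" and xo: "x \<in> orb s d" for d x
  proof -
    obtain n where "x = (s ^^ n) d" using xo unfolding orb_def by blast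
    then show ?thesis using Kp[OF dK] by simp
  qed
  have d0K: "d0 \<in> K" unfolding K_def RD_def using d0 by blast
  have reach: "\<exists>d\<in>K. v = orb s d" if "(orb s d0, v) \<in> R" for v
    using that unfolding R_def
  proof (induction rule: rtrancl_induct)
    case base
    then show ?case using d0K by blast
  next
    case (step v w)
    obtain d where d: "d \<in> K" "v = orb s d" using step.IH by blast
    obtain e' b where eb: "e' \<in> E" "v = orb s (e', b)" "w = orb s (e', \<not> b)"
      using adj_cases[OF step.hyps(2)] by blast
    have "(e', b) \<in> orb s d" using orb_eq_mem[of "(e', b)" d] eb(2) d(2) by simp
    then have "(e', b) \<in> K" using Korb[OF d(1)] by blast
    then have "(e', \<not> b) \<in> K" using Ka by fastforce
    then show ?case using eb(3) by blast
  qed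
  have allK: "d \<in> K" if "d \<in> darts E" for d
  proof -
    have "orb s d \<in> verts E s" "orb s d0 \<in> verts E s" using that d0 unfolding verts_def by blast+
    then have "(orb s d0, orb s d) \<in> R" using allR by blast
    then obtain d' where d': "d' \<in> K" "orb s d = orb s d'" using reach by blast
    have "d \<in> orb s d'" using orb_eq_mem[OF d'(2)] .
    then show ?thesis using Korb[OF d'(1)] by blast
  qed
  have Q: "faces E s // RD = {RD `` {orb ?\<phi> d0}}"
  proof
    show "faces E s // RD \<subseteq> {RD `` {orb ?\<phi> d0}}"
    proof
      fix Z assume "Z \<in> faces E s // RD"
      then obtain f where f: "f \<in> faces E s" "Z = RD `` {f}" by (auto elim!: quotientE)
      obtain d where d: "d \<in> darts E" "f = orb ?\<phi> d" using f(1) unfolding faces_def by blast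
      have "(orb ?\<phi> d0, f) \<in> RD" using allK[OF d(1)] d(2) unfolding K_def by blast
      then have "RD `` {orb ?\<phi> d0} = RD `` {f}" unfolding RD_def by (rule rtr_img_eq[OF sym_adj])
      then show "Z \<in> {RD `` {orb ?\<phi> d0}}" using f(2) by simp
    qed
    show "{RD `` {orb ?\<phi> d0}} \<subseteq> faces E s // RD"
      using d0 unfolding faces_def by (auto intro: quotientI)
  qed
  have "verts E ?\<phi> = faces E s" unfolding verts_def faces_def ..
  then show ?thesis unfolding ncomp_def using Q unfolding RD_def by simp
qed

lemma ncomp_conn:
  assumes "(src s e, tgt s e) \<in> (adj s \<omega>)\<^sup>*"
  shows "ncomp E s (insert e \<omega>) = ncomp E s \<omega>"
proof -
  have "(adj s (insert e \<omega>))\<^sup>* = (adj s \<omega>)\<^sup>*"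
  proof (rule rtrancl_subset)
    show "adj s \<omega> \<subseteq> adj s (insert e \<omega>)" unfolding adj_def by blast
    have "(tgt s e, src s e) \<in> (adj s \<omega>)\<^sup>*" using rtr_sym[OF sym_adj assms] .
    then show "adj s (insert e \<omega>) \<subseteq> (adj s \<omega>)\<^sup>*" using assms unfolding adj_insert by blast
  qed
  then show ?thesis unfolding ncomp_def by simp
qed

lemma finV: "finite (verts E s)" unfolding verts_def using finD by simp

lemma src_in: "e \<in> E \<Longrightarrow> src s e \<in> verts E s"
  unfolding verts_def src_def by (auto simp: in_darts)

lemma ncomp_le: "e \<in> E \<Longrightarrow> ncomp E s \<omega> \<le> ncomp E s (insert e \<omega>) + 1"
  unfolding ncomp_def adj_insert by (rule quotient_card_insert[OF finV sym_adj src_in])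

lemma ncomp_empty: "ncomp E s {} = card (verts E s)"
proof -
  have "verts E s // Id = (\<lambda>x. {x}) ` verts E s" unfolding quotient_def by auto
  moreover have "card ((\<lambda>x. {x}) ` verts E s) = card (verts E s)" by (rule card_image) (auto simp: inj_on_def)
  ultimately show ?thesis unfolding ncomp_def by simp
qed

lemma euler_sub:
  assumes conn: "ncomp E s E = 1"
    and eul: "int (card (verts E s)) - int (card E) + int (card (faces E s)) = 2"
    and om: "\<omega> \<subseteq> E"
  shows "int (ncomp E (face_perm s) (E - \<omega>)) = int (ncomp E s \<omega>) + int (card \<omega>) - int (card (verts E s)) + 1"
proof -
  let ?\<phi> = "face_perm s"
  interpret D: cmap E ?\<phi> by (rule phi_cmap)
  define \<Phi> where "\<Phi> = (\<lambda>\<omega>. int (ncomp E ?\<phi> (E - \<omega>)) - int (ncomp E s \<omega>) - int (card \<omega>))"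
  have mono: "\<Phi> (insert e \<omega>) \<le> \<Phi> \<omega>" if om: "\<omega> \<subseteq> E" and e: "e \<in> E" "e \<notin> \<omega>" for \<omega> e
  proof -
    define S where "S = E - insert e \<omega>"
    have ES: "E - \<omega> = insert e S" unfolding S_def using e by blast
    have finw: "finite \<omega>" using finite_subset[OF om finE] .
    have cw: "card (insert e \<omega>) = card \<omega> + 1" using finw e(2) by simp
    show ?thesis
    proof (cases "(src s e, tgt s e) \<in> (adj s \<omega>)\<^sup>*")
      case True
      have k: "ncomp E s (insert e \<omega>) = ncomp E s \<omega>" using ncomp_conn[OF True] .
      have kd: "ncomp E ?\<phi> S \<le> ncomp E ?\<phi> (insert e S) + 1" using D.ncomp_le[OF e(1)] .
      show ?thesis unfolding \<Phi>_def ES using k kd cw by (simp add: S_def)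
    next
      case False
      have c: "(src ?\<phi> e, tgt ?\<phi> e) \<in> (adj ?\<phi> S)\<^sup>*" unfolding S_def using key[OF om e False] .
      have kd: "ncomp E ?\<phi> (insert e S) = ncomp E ?\<phi> S" using D.ncomp_conn[OF c] .
      have k: "ncomp E s \<omega> \<le> ncomp E s (insert e \<omega>) + 1" using ncomp_le[OF e(1)] .
      show ?thesis unfolding \<Phi>_def ES using k kd cw by (simp add: S_def)
    qed
  qed
  have down: "finite \<omega> \<Longrightarrow> \<omega> \<subseteq> E \<Longrightarrow> \<Phi> \<omega> \<le> \<Phi> {}" for \<omega>
  proof (induction \<omega> rule: finite_induct)
    case empty
    then show ?case by simp
  next
    case (insert x F)
    then have "\<Phi> (insert x F) \<le> \<Phi> F" using mono[of F x] by simp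
    then show ?case using insert by simp
  qed
  have up: "finite T \<Longrightarrow> T \<subseteq> E \<Longrightarrow> \<Phi> E \<le> \<Phi> (E - T)" for T
  proof (induction T rule: finite_induct)
    case empty
    then show ?case by simp
  next
    case (insert t T)
    have eq: "E - T = insert t (E - insert t T)" using insert by blast
    have "\<Phi> (E - T) \<le> \<Phi> (E - insert t T)" unfolding eq using insert by (intro mono) auto
    then show ?case using insert by simp
  qed
  have p0: "\<Phi> {} = 1 - int (card (verts E s))"
    unfolding \<Phi>_def using dual_conn[OF conn] ncomp_empty by simp
  have vf: "verts E ?\<phi> = faces E s" unfolding verts_def faces_def ..
  have pE: "\<Phi> E = 1 - int (card (verts E s))"
    unfolding \<Phi>_def using D.ncomp_empty conn eul vf by simp
  have finw: "finite \<omega>" using finite_subset[OF om finE] .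
  have "\<Phi> \<omega> \<le> \<Phi> {}" using down[OF finw om] .
  moreover have "\<Phi> E \<le> \<Phi> \<omega>"
  proof -
    have "E - (E - \<omega>) = \<omega>" using om by blast
    then show ?thesis using up[of "E - \<omega>"] finE by simp
  qed
  ultimately have "\<Phi> \<omega> = 1 - int (card (verts E s))" using p0 pE by simp
  then show ?thesis unfolding \<Phi>_def by simp
qed
end

lemma sum_if_const:
  assumes "finite A"
  shows "(\<Sum>x\<in>A. if P x then c else 0) = real (card {x\<in>A. P x}) * (c::real)"
proof -
  have "(\<Sum>x\<in>A. if P x then c else 0) = (\<Sum>x\<in>{x\<in>A. P x}. c)"
    using sum.inter_filter[OF assms, of "\<lambda>_. c" P] by simp
  then show ?thesis by simp
qed

lemma pointwise:
  fixes a b :: real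
  assumes ab: "a + b = 1" and finE: "finite E" and om: "\<omega> \<subseteq> E"
  shows "spin_weight a b E s sg sg' * perc_cond a b E s sg sg' \<omega> =
     (if etaP E s sg \<inter> \<omega> = {} \<and> etaD E s sg' \<subseteq> \<omega> then a ^ card \<omega> * b ^ card (E - \<omega>) else 0)"
proof -
  let ?P = "etaP E s sg" and ?D = "etaD E s sg'"
  have PE: "?P \<subseteq> E" unfolding etaP_def by blast
  have DE: "?D \<subseteq> E" unfolding etaD_def by blast
  have b1: "1 - b = a" and a1: "1 - a = b" using ab by simp_all
  define g where "g = (\<lambda>e. if e \<in> ?D then (if e \<in> \<omega> then 1 else 0)
             else if e \<in> ?P then (if e \<in> \<omega> then 0 else 1)
             else if e \<in> \<omega> then a else (b::real))"
  have pc: "perc_cond a b E s sg sg' \<omega> = prod g E"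
    unfolding perc_cond_def g_def b1 a1 ..
  show ?thesis
  proof (cases "?P \<inter> \<omega> = {} \<and> ?D \<subseteq> \<omega>")
    case True
    then have disj: "?P \<inter> ?D = {}" by blast
    have sw: "spin_weight a b E s sg sg' = a ^ card ?D * b ^ card ?P"
      unfolding spin_weight_def using disj by simp
    define h where "h = (\<lambda>e. if e \<in> ?D then a else if e \<in> ?P then b else (1::real))"
    have gh: "g e * h e = (if e \<in> \<omega> then a else b)" if "e \<in> E" for e
      using True unfolding g_def h_def by auto
    have "prod g E * prod h E = (\<Prod>e\<in>E. if e \<in> \<omega> then a else b)"
      unfolding prod.distrib[symmetric] using gh by (rule prod.cong[OF refl])
    also have "\<dots> = a ^ card \<omega> * b ^ card (E - \<omega>)"
    proof -
      have "E \<inter> {x. x \<in> \<omega>} = \<omega>" "E \<inter> - {x. x \<in> \<omega>} = E - \<omega>" using om by auto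
      then show ?thesis using prod.If_cases[OF finE, of "\<lambda>x. x \<in> \<omega>" "\<lambda>_. a" "\<lambda>_. b"] by simp
    qed
    finally have 1: "prod g E * prod h E = a ^ card \<omega> * b ^ card (E - \<omega>)" .
    have "prod h E = a ^ card ?D * b ^ card ?P"
    proof -
      have s1: "E \<inter> {x. x \<in> ?D} = ?D" "E \<inter> - {x. x \<in> ?D} = E - ?D" using DE by auto
      have s2: "(E - ?D) \<inter> {x. x \<in> ?P} = ?P" "(E - ?D) \<inter> - {x. x \<in> ?P} = E - ?D - ?P" using PE disj by auto
      have f2: "finite (E - ?D)" using finE by simp
      have "prod h E = a ^ card ?D * (\<Prod>e\<in>E - ?D. if e \<in> ?P then b else 1)"
        unfolding h_def using prod.If_cases[OF finE, of "\<lambda>x. x \<in> ?D" "\<lambda>_. a"] s1 by simp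
      also have "(\<Prod>e\<in>E - ?D. if e \<in> ?P then b else 1) = b ^ card ?P"
        using prod.If_cases[OF f2, of "\<lambda>x. x \<in> ?P" "\<lambda>_. b" "\<lambda>_. 1"] s2 by simp
      finally show ?thesis by simp
    qed
    then show ?thesis using 1 True sw pc by (simp add: mult.commute)
  next
    case False
    have "spin_weight a b E s sg sg' * prod g E = 0"
    proof (cases "?P \<inter> ?D = {}")
      case True
      from False obtain e where "e \<in> E" "g e = 0"
      proof -
        assume th: "\<And>e. e \<in> E \<Longrightarrow> g e = 0 \<Longrightarrow> thesis"
        show thesis
        proof (cases "?P \<inter> \<omega> = {}")
          case True2: True
          then obtain e where "e \<in> ?D" "e \<notin> \<omega>" using False by blast
          then show thesis using th[of e] DE unfolding g_def by auto
        next
          case False2: False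
          then obtain e where "e \<in> ?P" "e \<in> \<omega>" by blast
          moreover have "e \<notin> ?D" using True calculation by blast
          ultimately show thesis using th[of e] PE unfolding g_def by auto
        qed
      qed
      then have "prod g E = 0" using finE by (metis prod_zero_iff)
      then show ?thesis by simp
    next
      case False
      then show ?thesis unfolding spin_weight_def by simp
    qed
    then have "spin_weight a b E s sg sg' * perc_cond a b E s sg sg' \<omega> = 0" using pc by simp
    then show ?thesis by (subst if_not_P[OF False])
  qed
qed


lemma etaD_etaP: "etaD E s sg' = etaP E (face_perm s) sg'"
  unfolding etaD_def etaP_def lface_def rface_def src_def tgt_def ..

context cmap
begin

lemma tgt_in: "e \<in> E \<Longrightarrow> tgt s e \<in> verts E s"
  unfolding verts_def tgt_def by (auto simp: in_darts)

lemma adj_sub: "\<omega> \<subseteq> E \<Longrightarrow> adj s \<omega> \<subseteq> verts E s \<times> verts E s"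
  unfolding adj_def using src_in tgt_in by blast

lemma count_etaP:
  fixes Q :: "complex set"
  assumes om: "\<omega> \<subseteq> E"
  shows "card {\<sigma> \<in> verts E s \<rightarrow>\<^sub>E Q. etaP E s \<sigma> \<inter> \<omega> = {}} = card Q ^ ncomp E s \<omega>"
proof -
  have eq: "(etaP E s \<sigma> \<inter> \<omega> = {}) = (\<forall>(x, y)\<in>adj s \<omega>. \<sigma> x = \<sigma> y)" for \<sigma> :: "('e \<times> bool) set \<Rightarrow> complex"
  proof
    assume h: "etaP E s \<sigma> \<inter> \<omega> = {}"
    have "\<sigma> (src s e) = \<sigma> (tgt s e)" if "e \<in> \<omega>" for e
      using h that om unfolding etaP_def by blast
    then show "\<forall>(x, y)\<in>adj s \<omega>. \<sigma> x = \<sigma> y" unfolding adj_def by force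
  next
    assume h: "\<forall>(x, y)\<in>adj s \<omega>. \<sigma> x = \<sigma> y"
    have "\<sigma> (src s e) = \<sigma> (tgt s e)" if "e \<in> \<omega>" for e
      using h that unfolding adj_def by blast
    then show "etaP E s \<sigma> \<inter> \<omega> = {}" unfolding etaP_def by blast
  qed
  have "{\<sigma> \<in> verts E s \<rightarrow>\<^sub>E Q. etaP E s \<sigma> \<inter> \<omega> = {}} = {\<sigma> \<in> verts E s \<rightarrow>\<^sub>E Q. \<forall>(x, y)\<in>adj s \<omega>. \<sigma> x = \<sigma> y}"
    using eq by blast
  also have "card \<dots> = card Q ^ ncomp E s \<omega>"
    unfolding ncomp_def by (rule count_const[OF finV sym_adj adj_sub[OF om]])
  finally show ?thesis .
qed

lemma joint_formula:
  fixes Q Q' :: "complex set" and a b :: real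
  assumes ab: "a + b = 1" and om: "\<omega> \<subseteq> E" and fQ: "finite Q" and fQ': "finite Q'"
  shows "joint_weight Q Q' a b E s \<omega> =
    real (card Q ^ ncomp E s \<omega>) * (real (card Q' ^ ncomp E (face_perm s) (E - \<omega>)) * (a ^ card \<omega> * b ^ card (E - \<omega>)))"
proof -
  let ?\<phi> = "face_perm s"
  interpret D: cmap E ?\<phi> by (rule phi_cmap)
  let ?c = "a ^ card \<omega> * b ^ card (E - \<omega>)"
  let ?NP = "{\<sigma> \<in> verts E s \<rightarrow>\<^sub>E Q. etaP E s \<sigma> \<inter> \<omega> = {}}"
  let ?ND = "{\<sigma>' \<in> faces E s \<rightarrow>\<^sub>E Q'. etaD E s \<sigma>' \<subseteq> \<omega>}"
  have f1: "finite (verts E s \<rightarrow>\<^sub>E Q)" using finV fQ by (rule finite_PiE)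
  have f2: "finite (faces E s \<rightarrow>\<^sub>E Q')" using D.finV fQ' unfolding verts_def faces_def by (rule finite_PiE)
  have "joint_weight Q Q' a b E s \<omega> = (\<Sum>sg\<in>verts E s \<rightarrow>\<^sub>E Q. \<Sum>sg'\<in>faces E s \<rightarrow>\<^sub>E Q'.
      if etaP E s sg \<inter> \<omega> = {} \<and> etaD E s sg' \<subseteq> \<omega> then ?c else 0)"
    unfolding joint_weight_def using pointwise[OF ab finE om] by simp
  also have "\<dots> = (\<Sum>sg\<in>verts E s \<rightarrow>\<^sub>E Q. if etaP E s sg \<inter> \<omega> = {} then real (card ?ND) * ?c else 0)"
  proof (rule sum.cong[OF refl])
    fix sg
    show "(\<Sum>sg'\<in>faces E s \<rightarrow>\<^sub>E Q'. if etaP E s sg \<inter> \<omega> = {} \<and> etaD E s sg' \<subseteq> \<omega> then ?c else 0) =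
        (if etaP E s sg \<inter> \<omega> = {} then real (card ?ND) * ?c else 0)"
      using sum_if_const[OF f2, of "\<lambda>sg'. etaD E s sg' \<subseteq> \<omega>" ?c] by simp
  qed
  also have "\<dots> = real (card ?NP) * (real (card ?ND) * ?c)"
    by (rule sum_if_const[OF f1])
  finally have jw: "joint_weight Q Q' a b E s \<omega> = real (card ?NP) * (real (card ?ND) * ?c)" .
  have "card ?NP = card Q ^ ncomp E s \<omega>" by (rule count_etaP[OF om])
  moreover have "card ?ND = card Q' ^ ncomp E ?\<phi> (E - \<omega>)"
  proof -
    have "?ND = {\<sigma>' \<in> verts E ?\<phi> \<rightarrow>\<^sub>E Q'. etaP E ?\<phi> \<sigma>' \<inter> (E - \<omega>) = {}}"
    proof -
      have "(etaD E s \<sigma>' \<subseteq> \<omega>) = (etaP E ?\<phi> \<sigma>' \<inter> (E - \<omega>) = {})" for \<sigma>'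
      proof -
        have sub: "etaD E s \<sigma>' \<subseteq> E" unfolding etaD_def by (rule Collect_restrict)
        have "(etaD E s \<sigma>' \<subseteq> \<omega>) = (etaD E s \<sigma>' \<inter> (E - \<omega>) = {})" using sub by blast
        then show ?thesis by (simp only: etaD_etaP)
      qed
      moreover have "verts E ?\<phi> = faces E s" unfolding verts_def faces_def ..
      ultimately show ?thesis by simp
    qed
    then show ?thesis using D.count_etaP[of "E - \<omega>" Q'] by simp
  qed
  ultimately show ?thesis using jw by simp
qed

end

theorem proposition2p1:
  fixes E :: "'e set" and s :: "'e \<times> bool \<Rightarrow> 'e \<times> bool"
    and Q Q' :: "complex set" and q q' :: nat and a b :: real
  assumes "spherical_map E s"
    and "q \<ge> 1" and "q' \<ge> 1"
    and "finite Q" and "card Q = q" and "uminus ` Q = Q"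
    and "finite Q'" and "card Q' = q'" and "uminus ` Q' = Q'"
    and "0 < a" and "a \<le> 1" and "0 < b" and "b \<le> 1" and "a + b = 1"
  shows "\<forall>\<omega> \<subseteq> E. omega_marginal Q Q' a b E s \<omega> =
           fk_law (real (q * q')) (real q' / (real q' + 1 / a - 1)) E s \<omega>"
proof -
  have finE: "finite E" and perm: "s permutes darts E" and conn: "ncomp E s E = 1"
    and eul: "int (card (verts E s)) - int (card E) + int (card (faces E s)) = 2"
    using assms(1) unfolding spherical_map_def by blast+
  interpret cmap E s
    using finE permutes_imp_bij[OF perm] by unfold_locales
  let ?\<phi> = "face_perm s"
  let ?V = "card (verts E s)"
  define p where "p = real q' / (real q' + 1 / a - 1)"
  define t where "t = real q' * a + b"
  have a0: "a \<noteq> 0" using assms(10) by simp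
  have qpos: "real q' > 0" using assms(3) by simp
  have tpos: "t > 0" unfolding t_def using qpos assms(10) assms(12) by (simp add: add_pos_pos)
  have pe: "p = real q' * a / t"
  proof -
    have "real q' + 1 / a - 1 = t / a" unfolding t_def using a0 assms(14) by (simp add: field_simps)
    then show ?thesis unfolding p_def using a0 tpos by (simp add: field_simps)
  qed
  have p1e: "1 - p = b / t" unfolding pe using tpos unfolding t_def by (simp add: field_simps)
  define K where "K = real q' * t ^ card E / real q' ^ ?V"
  have Kpos: "K > 0" unfolding K_def using qpos tpos by simp
  have JK: "joint_weight Q Q' a b E s \<omega> = K * fk_weight (real (q * q')) p E s \<omega>" if om: "\<omega> \<subseteq> E" for \<omega>
  proof -
    let ?k = "ncomp E s \<omega>" and ?kd = "ncomp E ?\<phi> (E - \<omega>)" and ?m = "card \<omega>" and ?n = "card (E - \<omega>)"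
    have es: "int ?kd = int ?k + int ?m - int ?V + 1" using euler_sub[OF conn eul om] .
    then have es': "?kd + ?V = ?k + ?m + 1" by linarith
    have mn: "?m + ?n = card E" using om finE by (metis card_Diff_subset finite_subset le_add_diff_inverse card_mono)
    have jf: "joint_weight Q Q' a b E s \<omega> = real q ^ ?k * (real q' ^ ?kd * (a ^ ?m * b ^ ?n))"
      using joint_formula[OF assms(14) om assms(4) assms(7)] assms(5) assms(8) by simp
    have fk: "fk_weight (real (q * q')) p E s \<omega> = (real q * real q') ^ ?k * (real q' * a) ^ ?m * b ^ ?n / t ^ card E"
    proof -
      have "fk_weight (real (q * q')) p E s \<omega> = (real q * real q') ^ ?k * (real q' * a / t) ^ ?m * (b / t) ^ ?n"
        unfolding fk_weight_def pe[symmetric] p1e[symmetric] by simp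
      also have "\<dots> = (real q * real q') ^ ?k * (real q' * a) ^ ?m * b ^ ?n / (t ^ ?m * t ^ ?n)"
        by (simp add: power_divide)
      also have "t ^ ?m * t ^ ?n = t ^ card E" using mn by (simp add: power_add[symmetric])
      finally show ?thesis .
    qed
    have "joint_weight Q Q' a b E s \<omega> * real q' ^ ?V = real q ^ ?k * real q' ^ (?kd + ?V) * a ^ ?m * b ^ ?n"
      unfolding jf by (simp add: power_add)
    also have "\<dots> = real q ^ ?k * real q' ^ (?k + ?m + 1) * a ^ ?m * b ^ ?n" using es' by simp
    also have "\<dots> = real q' * t ^ card E * fk_weight (real (q * q')) p E s \<omega>"
      unfolding fk using tpos by (simp add: power_add power_mult_distrib field_simps)
    finally have "joint_weight Q Q' a b E s \<omega> * real q' ^ ?V = real q' * t ^ card E * fk_weight (real (q * q')) p E s \<omega>" .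
    then show ?thesis unfolding K_def using qpos by (simp add: field_simps)
  qed
  show ?thesis
  proof (intro allI impI)
    fix \<omega> assume om: "\<omega> \<subseteq> E"
    have den: "(\<Sum>\<omega>'\<in>Pow E. joint_weight Q Q' a b E s \<omega>') = K * (\<Sum>\<omega>'\<in>Pow E. fk_weight (real (q * q')) p E s \<omega>')"
      unfolding sum_distrib_left by (rule sum.cong[OF refl]) (simp add: JK)
    show "omega_marginal Q Q' a b E s \<omega> = fk_law (real (q * q')) (real q' / (real q' + 1 / a - 1)) E s \<omega>"
      unfolding omega_marginal_def fk_law_def p_def[symmetric] den JK[OF om]
      using Kpos by simp
  qed
qed

end
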